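(* Let $p\equiv1\pmod 4$ be a prime. Let $S\subset\mathbb{P}^5$ be the surface over $\mathbb{F}_p$ defined by $$x_1^2-x_2^2=x_3^2,\qquad x_0^2-x_1^2=x_4^2,\qquad x_0^2-x_2^2=x_5^2,$$ and let $X\subset\mathbb{A}^3$ be the affine surface over $\mathbb{F}_p$ given by $z^2=(x^2y^2+1)(x^2+y^2)$. Then $S$ is birationally isomorphic to $X$ over $\mathbb{F}_p$. Moreover, there is an isomorphism (of varieties over $\mathbb{F}_p$) between $S\setminus D$ and $X\setminus D_1$, where $D=S\cap\{x_1x_5=0\}$ and $D_1=X\cap\{xyz=0\}$. *)

theory Defs
  imports "HOL-Computational_Algebra.Polynomial"
begin

definition alg_closed :: "'k::field itself \<Rightarrow> bool" where
  "alg_closed _ \<longleftrightarrow> (\<forall>q::'k poly. degree q \<ge> 1 \<longrightarrow> (\<exists>x. poly q x = 0))"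

text \<open>Polynomial expressions in variables X_0, X_1, ... with integer coefficients;
  in a field of characteristic p the integer constants are exactly the elements of F_p,
  so these are the polynomials with coefficients in F_p.\<close>

datatype mpoly = Var nat | Const int | Add mpoly mpoly | Mul mpoly mpoly

fun ev :: "(nat \<Rightarrow> 'k::field) \<Rightarrow> mpoly \<Rightarrow> 'k" where
  "ev x (Var i) = x i"
| "ev x (Const c) = of_int c"
| "ev x (Add P Q) = ev x P + ev x Q"
| "ev x (Mul P Q) = ev x P * ev x Q"

definition homog :: "nat \<Rightarrow> mpoly \<Rightarrow> 'k::field itself \<Rightarrow> bool" where
  "homog d P _ \<longleftrightarrow> (\<forall>(c::'k) x. ev (\<lambda>i. c * x i) P = c ^ d * ev x P)"

text \<open>Points of P^5 are represented by nonzero vectors (coordinates 0..5, others 0)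
  up to scaling; points of A^3 by vectors with coordinates 0,1,2 = x,y,z.\<close>

definition proj_eq :: "(nat \<Rightarrow> 'k::field) \<Rightarrow> (nat \<Rightarrow> 'k) \<Rightarrow> bool" where
  "proj_eq u v \<longleftrightarrow> (\<exists>c. c \<noteq> 0 \<and> u = (\<lambda>i. c * v i))"

definition S_cone :: "(nat \<Rightarrow> 'k::field) set" where
  "S_cone = {x. (\<forall>i>5. x i = 0) \<and> (\<exists>i\<le>5. x i \<noteq> 0) \<and>
     (x 1)^2 - (x 2)^2 = (x 3)^2 \<and> (x 0)^2 - (x 1)^2 = (x 4)^2 \<and> (x 0)^2 - (x 2)^2 = (x 5)^2}"

definition S_minus_D :: "(nat \<Rightarrow> 'k::field) set" where
  "S_minus_D = {x \<in> S_cone. x 1 * x 5 \<noteq> 0}"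

definition X_pts :: "(nat \<Rightarrow> 'k::field) set" where
  "X_pts = {v. (\<forall>i>2. v i = 0) \<and>
     (v 2)^2 = ((v 0)^2 * (v 1)^2 + 1) * ((v 0)^2 + (v 1)^2)}"

definition X_minus_D1 :: "(nat \<Rightarrow> 'k::field) set" where
  "X_minus_D1 = {v \<in> X_pts. v 0 * v 1 * v 2 \<noteq> 0}"

definition proj_open :: "(nat \<Rightarrow> 'k::field) set \<Rightarrow> (nat \<Rightarrow> 'k) set \<Rightarrow> bool" where
  "proj_open A U \<longleftrightarrow> U \<subseteq> A \<and> (\<forall>a\<in>U. \<exists>d Q. homog d Q TYPE('k) \<and> ev a Q \<noteq> 0 \<and>
      {b\<in>A. ev b Q \<noteq> 0} \<subseteq> U)"

definition proj_dense :: "(nat \<Rightarrow> 'k::field) set \<Rightarrow> (nat \<Rightarrow> 'k) set \<Rightarrow> bool" where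
  "proj_dense A U \<longleftrightarrow> (\<forall>d Q. homog d Q TYPE('k) \<longrightarrow> (\<exists>b\<in>A. ev b Q \<noteq> 0) \<longrightarrow>
      (\<exists>b\<in>U. ev b Q \<noteq> 0))"

definition aff_open :: "(nat \<Rightarrow> 'k::field) set \<Rightarrow> (nat \<Rightarrow> 'k) set \<Rightarrow> bool" where
  "aff_open A V \<longleftrightarrow> V \<subseteq> A \<and> (\<forall>a\<in>V. \<exists>Q. ev a Q \<noteq> 0 \<and> {b\<in>A. ev b Q \<noteq> 0} \<subseteq> V)"

definition aff_dense :: "(nat \<Rightarrow> 'k::field) set \<Rightarrow> (nat \<Rightarrow> 'k) set \<Rightarrow> bool" where
  "aff_dense A V \<longleftrightarrow> (\<forall>Q. (\<exists>b\<in>A. ev b Q \<noteq> 0) \<longrightarrow> (\<exists>b\<in>V. ev b Q \<noteq> 0))"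

definition reg_proj_to_aff ::
  "(nat \<Rightarrow> 'k::field) set \<Rightarrow> ((nat \<Rightarrow> 'k) \<Rightarrow> (nat \<Rightarrow> 'k)) \<Rightarrow> bool" where
  "reg_proj_to_aff U f \<longleftrightarrow>
     (\<forall>a\<in>U. \<forall>b\<in>U. proj_eq a b \<longrightarrow> f a = f b) \<and>
     (\<forall>a\<in>U. \<exists>d Q P. homog d Q TYPE('k) \<and> (\<forall>i<3. homog d (P i) TYPE('k)) \<and> ev a Q \<noteq> 0 \<and>
        (\<forall>b\<in>U. ev b Q \<noteq> 0 \<longrightarrow>
            f b = (\<lambda>i. if i < 3 then ev b (P i) / ev b Q else 0)))"

definition reg_aff_to_proj ::
  "(nat \<Rightarrow> 'k::field) set \<Rightarrow> ((nat \<Rightarrow> 'k) \<Rightarrow> (nat \<Rightarrow> 'k)) \<Rightarrow> bool" where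
  "reg_aff_to_proj V g \<longleftrightarrow>
     (\<forall>a\<in>V. \<exists>Q P. ev a Q \<noteq> 0 \<and>
        (\<forall>b\<in>V. ev b Q \<noteq> 0 \<longrightarrow> (\<exists>i\<le>5. ev b (P i) \<noteq> 0) \<and>
            proj_eq (g b) (\<lambda>i. if i \<le> 5 then ev b (P i) else 0)))"

definition isomorphic_over_Fp ::
  "(nat \<Rightarrow> 'k::field) set \<Rightarrow> (nat \<Rightarrow> 'k) set \<Rightarrow> bool" where
  "isomorphic_over_Fp U V \<longleftrightarrow> (\<exists>f g.
     reg_proj_to_aff U f \<and> reg_aff_to_proj V g \<and> f ` U \<subseteq> V \<and> g ` V \<subseteq> U \<and>
     (\<forall>b\<in>V. f (g b) = b) \<and> (\<forall>a\<in>U. proj_eq (g (f a)) a))"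

definition birational_over_Fp ::
  "(nat \<Rightarrow> 'k::field) set \<Rightarrow> (nat \<Rightarrow> 'k) set \<Rightarrow> bool" where
  "birational_over_Fp A B \<longleftrightarrow> (\<exists>U V. proj_open A U \<and> proj_dense A U \<and>
      aff_open B V \<and> aff_dense B V \<and> isomorphic_over_Fp U V)"

end

theory Submission
  imports Defs "HOL-Number_Theory.Euler_Criterion"
begin


lemma sqrt_m1_int:
  fixes p :: nat
  assumes "prime p" "p mod 4 = 1"
  shows "\<exists>c::int. int p dvd c^2 + 1"
proof -
  have "p \<noteq> 2" using assms(2) by auto
  moreover have "p \<ge> 2" using prime_ge_2_nat[OF assms(1)] .
  ultimately have p2n: "2 < p" by linarith
  then have p2: "2 < int p" by linarith
  have "p = 4 * (p div 4) + p mod 4" by simp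
  then have "p - 1 = 2 * (2 * (p div 4))" using assms(2) by linarith
  then have "(p - 1) div 2 = 2 * (p div 4)" by simp
  then have "even ((p - 1) div 2)" by simp
  then have e: "(-1::int) ^ ((p - 1) div 2) = 1" by simp
  have L: "[Legendre (-1) (int p) = 1] (mod int p)"
    using euler_criterion[OF assms(1) p2n, of "-1"] e by simp
  have "QuadRes (int p) (-1)"
  proof (rule ccontr)
    assume nq: "\<not> QuadRes (int p) (-1)"
    have "\<not> [-1 = 0] (mod int p)"
      using p2 by (simp add: cong_def zmod_minus1)
    then have "Legendre (-1) (int p) = -1" using nq by (simp add: Legendre_def)
    then have "[-1 = 1] (mod int p)" using L by simp
    then have "int p dvd 2" by (simp add: cong_iff_dvd_diff)
    then have "int p \<le> 2" by (rule zdvd_imp_le) simp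
    then show False using p2 by simp
  qed
  then obtain y where "[y^2 = -1] (mod int p)" unfolding QuadRes_def by blast
  then have "int p dvd y^2 + 1" by (simp add: cong_iff_dvd_diff)
  then show ?thesis by blast
qed

lemma line_poly:
  fixes c a :: "nat \<Rightarrow> 'k::field"
  shows "\<exists>q::'k poly. \<forall>t. ev (\<lambda>i. c i + t * (a i - c i)) P = poly q t"
proof (induction P)
  case (Var i) show ?case by (rule exI[of _ "[:c i, a i - c i:]"]) (simp add: algebra_simps)
next
  case (Const x) show ?case by (rule exI[of _ "[:of_int x:]"]) simp
next
  case (Add P Q) then obtain p q where "\<forall>t. ev (\<lambda>i. c i + t * (a i - c i)) P = poly p t"
    "\<forall>t. ev (\<lambda>i. c i + t * (a i - c i)) Q = poly q t" by blast
  then show ?case by (intro exI[of _ "p+q"]) simp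
next
  case (Mul P Q) then obtain p q where "\<forall>t. ev (\<lambda>i. c i + t * (a i - c i)) P = poly p t"
    "\<forall>t. ev (\<lambda>i. c i + t * (a i - c i)) Q = poly q t" by blast
  then show ?case by (intro exI[of _ "p*q"]) simp
qed

lemma alg_closed_infinite:
  assumes "alg_closed TYPE('k::field)"
  shows "infinite (UNIV :: 'k set)"
proof
  assume fin: "finite (UNIV :: 'k set)"
  define r :: "'k poly" where "r = (\<Prod>a\<in>UNIV. [:-a, 1:])"
  have dr: "degree r = card (UNIV :: 'k set)"
    unfolding r_def by (subst degree_prod_sum_eq) auto
  have "card (UNIV :: 'k set) \<ge> 1" using fin by (simp add: Suc_le_eq finite_UNIV_card_ge_0)
  then have "degree (1::'k poly) < degree r" using dr by simp
  then have "degree (r + 1) = degree r" by (rule degree_add_eq_left)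
  then have "degree (r + 1) \<ge> 1" using dr \<open>card (UNIV :: 'k set) \<ge> 1\<close> by simp
  then obtain x where "poly (r + 1) x = 0" using assms unfolding alg_closed_def by blast
  moreover have "poly r x = 0" unfolding r_def poly_prod using fin
    by (simp add: prod_zero_iff)
  ultimately show False by simp
qed

lemma alg_closed_sqrt:
  assumes "alg_closed TYPE('k::field)"
  shows "\<exists>r. r * r = (a::'k)"
proof -
  have "degree [:-a, 0, 1:] \<ge> 1" by simp
  then obtain x where "poly [:-a, 0, 1:] x = 0" using assms unfolding alg_closed_def by blast
  then show ?thesis by (auto simp: algebra_simps)
qed

definition ext_ok :: "(nat \<Rightarrow> 'k::field) set \<Rightarrow> mpoly \<Rightarrow> bool" where
  "ext_ok W G \<longleftrightarrow> (\<forall>P. (\<forall>x\<in>W. ev x G \<noteq> 0 \<longrightarrow> ev x P = 0) \<longrightarrow> (\<forall>x\<in>W. ev x P = 0))"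

lemma ext_ok_base:
  fixes W :: "(nat \<Rightarrow> 'k::field) set"
  assumes inf: "infinite (UNIV :: 'k set)"
    and conv: "\<And>c a t. c \<in> W \<Longrightarrow> a \<in> W \<Longrightarrow> (\<lambda>i. c i + t * (a i - c i)) \<in> W"
    and a: "a \<in> W" "ev a G \<noteq> 0"
  shows "ext_ok W G"
  unfolding ext_ok_def
proof (intro allI impI ballI, rule ccontr)
  fix P c assume H: "\<forall>x\<in>W. ev x G \<noteq> 0 \<longrightarrow> ev x P = 0" and c: "c \<in> W" "ev c P \<noteq> 0"
  obtain p where p: "\<forall>t. ev (\<lambda>i. c i + t * (a i - c i)) P = poly p t" using line_poly by blast
  obtain g where g: "\<forall>t. ev (\<lambda>i. c i + t * (a i - c i)) G = poly g t" using line_poly by blast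
  have "(\<lambda>i. c i + 0 * (a i - c i)) = c" by simp
  then have "poly p 0 \<noteq> 0" using p c by metis
  then have p0: "p \<noteq> 0" by auto
  have "(\<lambda>i. c i + 1 * (a i - c i)) = a" by simp
  then have "poly g 1 \<noteq> 0" using g a by metis
  then have g0: "g \<noteq> 0" by auto
  have fin: "finite {t. poly (p*g) t = 0}" using p0 g0 by (intro poly_roots_finite) simp
  have "{t. poly (p*g) t = 0} \<noteq> UNIV"
  proof
    assume "{t. poly (p*g) t = 0} = UNIV"
    then show False using inf fin by metis
  qed
  then obtain t where "poly (p*g) t \<noteq> 0" by auto
  then have "poly p t \<noteq> 0" "poly g t \<noteq> 0" by auto
  moreover have "(\<lambda>i. c i + t * (a i - c i)) \<in> W" using conv c a by blast
  ultimately show False using H p g by metis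
qed

definition indep :: "nat \<Rightarrow> mpoly \<Rightarrow> 'k::field itself \<Rightarrow> bool" where
  "indep j P _ \<longleftrightarrow> (\<forall>(x::nat\<Rightarrow>'k) v. ev (x(j:=v)) P = ev x P)"

fun red :: "nat \<Rightarrow> mpoly \<Rightarrow> mpoly \<Rightarrow> mpoly \<times> mpoly" where
  "red j F (Var i) = (if i = j then (Const 0, Const 1) else (Var i, Const 0))"
| "red j F (Const c) = (Const c, Const 0)"
| "red j F (Add P Q) = (let (A1,B1) = red j F P; (A2,B2) = red j F Q in (Add A1 A2, Add B1 B2))"
| "red j F (Mul P Q) = (let (A1,B1) = red j F P; (A2,B2) = red j F Q in
     (Add (Mul A1 A2) (Mul F (Mul B1 B2)), Add (Mul A1 B2) (Mul B1 A2)))"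

lemma red_indep:
  assumes "indep j F TYPE('k::field)"
  shows "indep j (fst (red j F P)) TYPE('k) \<and> indep j (snd (red j F P)) TYPE('k)"
  using assms by (induction P) (auto simp: indep_def split: prod.splits)

lemma red_ev:
  fixes x :: "nat \<Rightarrow> 'k::field"
  assumes "(x j)^2 = ev x F"
  shows "ev x P = ev x (fst (red j F P)) + x j * ev x (snd (red j F P))"
  using assms
  by (induction P) (auto simp: split: prod.splits simp: algebra_simps power2_eq_square)

lemma ext_ok_step:
  fixes W :: "(nat \<Rightarrow> 'k::field) set"
  assumes ok: "ext_ok W G"
    and Wj: "\<And>x v. x \<in> W \<Longrightarrow> x(j:=v) \<in> W"
    and iG: "indep j G TYPE('k)" and iF: "indep j F TYPE('k)"
    and GF: "\<And>x. ev x G \<noteq> 0 \<Longrightarrow> ev x F \<noteq> (0::'k)"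
    and two: "(2::'k) \<noteq> 0"
    and sq: "\<And>a::'k. \<exists>r. r * r = a"
  shows "ext_ok {x\<in>W. (x j)^2 = ev x F} G"
  unfolding ext_ok_def
proof (intro allI impI ballI)
  fix P y
  assume H: "\<forall>x\<in>{x \<in> W. (x j)\<^sup>2 = ev x F}. ev x G \<noteq> 0 \<longrightarrow> ev x P = 0"
    and y: "y \<in> {x \<in> W. (x j)\<^sup>2 = ev x F}"
  define A where "A = fst (red j F P)"
  define B where "B = snd (red j F P)"
  have iA: "indep j A TYPE('k)" and iB: "indep j B TYPE('k)"
    using red_indep[OF iF] unfolding A_def B_def by auto
  have AB: "\<forall>x\<in>W. ev x G \<noteq> 0 \<longrightarrow> ev x A = 0 \<and> ev x B = 0"
  proof (intro ballI impI)
    fix x assume x: "x \<in> W" "ev x G \<noteq> 0"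
    obtain r where r: "r * r = ev x F" using sq by blast
    have r0: "r \<noteq> 0" using r GF[OF x(2)] by auto
    have "ev (x(j:=s)) P = ev x A + s * ev x B" if s: "s * s = ev x F" for s
    proof -
      have e: "((x(j:=s)) j)^2 = ev (x(j:=s)) F" using s iF unfolding indep_def
        by (simp add: power2_eq_square)
      have 1: "ev (x(j:=s)) P = ev (x(j:=s)) A + (x(j:=s)) j * ev (x(j:=s)) B"
        using red_ev[OF e, of P] unfolding A_def B_def .
      have 2: "ev (x(j:=s)) A = ev x A" "ev (x(j:=s)) B = ev x B"
        using iA iB unfolding indep_def by blast+
      show ?thesis using 1 2 by simp
    qed
    moreover have "ev (x(j:=s)) P = 0" if s: "s * s = ev x F" for s
    proof -
      have "x(j:=s) \<in> W" using Wj x by blast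
      moreover have "((x(j:=s)) j)^2 = ev (x(j:=s)) F" using s iF unfolding indep_def
        by (simp add: power2_eq_square)
      moreover have "ev (x(j:=s)) G \<noteq> 0" using iG x unfolding indep_def by simp
      ultimately show ?thesis using H by blast
    qed
    ultimately have ev0: "ev x A + s * ev x B = 0" if "s * s = ev x F" for s
      using that by metis
    have e1: "ev x A + r * ev x B = 0" using ev0 r by blast
    have e2: "ev x A + (-r) * ev x B = 0" using ev0[of "-r"] r by simp
    have "2 * ev x A = 0" using e1 e2 by (simp add: algebra_simps)
    then have "ev x A = 0" using two by simp
    then have "ev x B = 0" using e1 r0 by simp
    with \<open>ev x A = 0\<close> show "ev x A = 0 \<and> ev x B = 0" by simp
  qed
  have "\<forall>x\<in>W. ev x A = 0" using ok AB unfolding ext_ok_def by blast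
  moreover have "\<forall>x\<in>W. ev x B = 0" using ok AB unfolding ext_ok_def by blast
  moreover have yW: "y \<in> W" and yF: "(y j)^2 = ev y F" using y by auto
  moreover have "ev y P = ev y A + y j * ev y B" using red_ev[OF yF, of P] unfolding A_def B_def .
  ultimately show "ev y P = 0" by simp
qed



lemma algA1:
  fixes a1 a2 a3 i :: "'k::field"
  assumes "i*i = -1" "a1^2 - a2^2 = a3^2"
  shows "(a3 - i*a2)*(a3 + i*a2) = a1^2"
  using assms by Groebner_Basis.algebra

lemma algA2:
  fixes a0 a1 a4 :: "'k::field"
  assumes "a0^2 - a1^2 = a4^2"
  shows "(a0 + a4)*(a0 - a4) = a1^2"
  using assms by Groebner_Basis.algebra

lemma algX:
  fixes a0 a1 a2 a3 a4 a5 i :: "'k::field"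
  assumes "i*i = -1" "a1^2 - a2^2 = a3^2" "a0^2 - a1^2 = a4^2" "a0^2 - a2^2 = a5^2" "a1 \<noteq> 0"
  shows "(2 * a5 * (a3-i*a2) * (a0+a4) / a1^3)^2 =
    (((a3-i*a2)/a1)^2*((a0+a4)/a1)^2+1)*(((a3-i*a2)/a1)^2+((a0+a4)/a1)^2)"
proof -
  have "4*a5^2*(a3-i*a2)^2*(a0+a4)^2 = ((a3-i*a2)^2*(a0+a4)^2 + a1^4)*((a3-i*a2)^2+(a0+a4)^2)"
    using assms(1-4) by Groebner_Basis.algebra
  then show ?thesis using assms(5) by (simp add: field_simps power2_eq_square) Groebner_Basis.algebra
qed

lemma algG:
  fixes x y z i :: "'k::field"
  assumes "i*i = -1" "z^2 = (x^2*y^2+1)*(x^2+y^2)"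
  shows "(2*x*y)^2 - (i*y*(x^2-1))^2 = (y*(x^2+1))^2"
    "(x*(y^2+1))^2 - (2*x*y)^2 = (x*(y^2-1))^2"
    "(x*(y^2+1))^2 - (i*y*(x^2-1))^2 = z^2"
proof -
  show "(2*x*y)^2 - (i*y*(x^2-1))^2 = (y*(x^2+1))^2" using assms by Groebner_Basis.algebra
  show "(x*(y^2+1))^2 - (2*x*y)^2 = (x*(y^2-1))^2" by Groebner_Basis.algebra
  show "(x*(y^2+1))^2 - (i*y*(x^2-1))^2 = z^2" using assms by Groebner_Basis.algebra
qed

lemma algH:
  fixes x y z i :: "'k::field"
  assumes "i*i = -1" "2*x*y \<noteq> 0"
  shows "(y*(x^2+1) - i*(i*y*(x^2-1))) / (2*x*y) = x"
    "(x*(y^2+1) + x*(y^2-1)) / (2*x*y) = y"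
    "2*z*(y*(x^2+1) - i*(i*y*(x^2-1)))*(x*(y^2+1)+x*(y^2-1)) / (2*x*y)^3 = z"
proof -
  have e: "y*(x^2+1) - i*(i*y*(x^2-1)) = x * (2*x*y)" using assms(1) by Groebner_Basis.algebra
  have f: "x*(y^2+1) + x*(y^2-1) = y * (2*x*y)" by Groebner_Basis.algebra
  show "(y*(x^2+1) - i*(i*y*(x^2-1))) / (2*x*y) = x" using e assms(2) by simp
  show "(x*(y^2+1) + x*(y^2-1)) / (2*x*y) = y" using f assms(2) by simp
  have g: "2*z*(x * (2*x*y))*(y * (2*x*y)) = z * (2*x*y)^3"
    by (simp add: power3_eq_cube algebra_simps)
  show "2*z*(y*(x^2+1) - i*(i*y*(x^2-1)))*(x*(y^2+1)+x*(y^2-1)) / (2*x*y)^3 = z"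
    unfolding e f g using assms(2) by simp
qed

lemma algK:
  fixes a0 a1 a2 a3 a4 a5 i :: "'k::field"
  assumes "i*i = -1" "a1^2 - a2^2 = a3^2" "a0^2 - a1^2 = a4^2" "a0^2 - a2^2 = a5^2" "a1 \<noteq> 0"
  defines "X \<equiv> (a3-i*a2)/a1" and "Y \<equiv> (a0+a4)/a1" and "Z \<equiv> 2 * a5 * (a3-i*a2) * (a0+a4) / a1^3"
  defines "c \<equiv> 2*X*Y/a1"
  shows "X*(Y^2+1) = c*a0" "2*X*Y = c*a1" "i*Y*(X^2-1) = c*a2" "Y*(X^2+1) = c*a3"
    "X*(Y^2-1) = c*a4" "Z = c*a5"
proof -
  have h0: "(a0+a4)^2 + a1^2 = 2*(a0+a4)*a0" using assms(3) by Groebner_Basis.algebra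
  show "X*(Y^2+1) = c*a0" unfolding X_def Y_def c_def using assms(5) h0
    by (simp add: field_simps power2_eq_square) Groebner_Basis.algebra
  show "2*X*Y = c*a1" unfolding c_def using assms(5) by simp
  have h2: "i*((a3-i*a2)^2 - a1^2) = 2*(a3-i*a2)*a2" using assms(1,2) by Groebner_Basis.algebra
  show "i*Y*(X^2-1) = c*a2" unfolding X_def Y_def c_def using assms(5) h2
    by (simp add: field_simps power2_eq_square) Groebner_Basis.algebra
  have h3: "(a3-i*a2)^2 + a1^2 = 2*(a3-i*a2)*a3" using assms(1,2) by Groebner_Basis.algebra
  show "Y*(X^2+1) = c*a3" unfolding X_def Y_def c_def using assms(5) h3
    by (simp add: field_simps power2_eq_square) Groebner_Basis.algebra
  have h4: "(a0+a4)^2 - a1^2 = 2*(a0+a4)*a4" using assms(3) by Groebner_Basis.algebra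
  show "X*(Y^2-1) = c*a4" unfolding X_def Y_def c_def using assms(5) h4
    by (simp add: field_simps power2_eq_square)
  show "Z = c*a5" unfolding Z_def X_def Y_def c_def using assms(5)
    by (simp add: field_simps power3_eq_cube)
qed



definition mdiff :: "mpoly \<Rightarrow> mpoly \<Rightarrow> mpoly" where "mdiff P Q = Add P (Mul (Const (-1)) Q)"
definition msq :: "nat \<Rightarrow> mpoly" where "msq i = Mul (Var i) (Var i)"
lemma ev_mdiff[simp]: "ev x (mdiff P Q) = ev x P - ev x Q" by (simp add: mdiff_def)
lemma ev_msq[simp]: "ev x (msq i) = (x i)^2" by (simp add: msq_def power2_eq_square)

definition F3 where "F3 = mdiff (msq 1) (msq 2)"
definition F4 where "F4 = mdiff (msq 0) (msq 1)"
definition F5 where "F5 = mdiff (msq 0) (msq 2)"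
definition GS where "GS = Mul (Var 1) (Mul F3 (Mul F4 F5))"
definition FX where "FX = Mul (Add (Mul (msq 0) (msq 1)) (Const 1)) (Add (msq 0) (msq 1))"
definition GX where "GX = Mul (Var 0) (Mul (Var 1) FX)"

lemma homog_iff: "homog d P TYPE('k::field) \<longleftrightarrow> (\<forall>(c::'k) x. ev (\<lambda>i. c * x i) P = c ^ d * ev x P)"
  by (simp add: homog_def)

definition fQ :: mpoly where "fQ = Mul (Var 1) (Mul (Var 1) (Var 1))"
definition fA :: "int \<Rightarrow> mpoly" where "fA ci = Add (Mul (Const (-ci)) (Var 2)) (Var 3)"
definition fB :: mpoly where "fB = Add (Var 0) (Var 4)"
definition fP :: "int \<Rightarrow> nat \<Rightarrow> mpoly" where
  "fP ci i = (if i = 0 then Mul (fA ci) (Mul (Var 1) (Var 1))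
     else if i = 1 then Mul fB (Mul (Var 1) (Var 1))
     else Mul (Mul (Const 2) (Var 5)) (Mul (fA ci) fB))"
definition fmap :: "int \<Rightarrow> (nat \<Rightarrow> 'k::field) \<Rightarrow> (nat \<Rightarrow> 'k)" where
  "fmap ci a = (\<lambda>i. if i < 3 then ev a (fP ci i) / ev a fQ else 0)"

definition gP :: "int \<Rightarrow> nat \<Rightarrow> mpoly" where
  "gP ci i = (if i = 0 then Mul (Var 0) (Add (msq 1) (Const 1))
     else if i = 1 then Mul (Const 2) (Mul (Var 0) (Var 1))
     else if i = 2 then Mul (Const ci) (Mul (Var 1) (Add (msq 0) (Const (-1))))
     else if i = 3 then Mul (Var 1) (Add (msq 0) (Const 1))
     else if i = 4 then Mul (Var 0) (Add (msq 1) (Const (-1)))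
     else Var 2)"
definition gmap :: "int \<Rightarrow> (nat \<Rightarrow> 'k::field) \<Rightarrow> (nat \<Rightarrow> 'k)" where
  "gmap ci v = (\<lambda>i. if i \<le> 5 then ev v (gP ci i) else 0)"

lemma homog_fQ: "homog 3 fQ TYPE('k::field)"
  unfolding homog_iff fQ_def by (simp add: algebra_simps power3_eq_cube)

lemma homog_fP: "homog 3 (fP ci i) TYPE('k::field)"
  unfolding homog_iff fP_def fA_def fB_def by (simp add: algebra_simps power3_eq_cube)

lemma ev_fQ: "ev a fQ = (a 1)^3"
  by (simp add: fQ_def power3_eq_cube)

lemma fmap_eq:
  fixes a :: "nat \<Rightarrow> 'k::field"
  assumes "a 1 \<noteq> 0"
  shows "fmap ci a = (\<lambda>i. if i = 0 then (a 3 - of_int ci * a 2) / a 1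
      else if i = 1 then (a 0 + a 4) / a 1
      else if i = 2 then 2 * a 5 * (a 3 - of_int ci * a 2) * (a 0 + a 4) / (a 1)^3 else 0)"
  using assms unfolding fmap_def
  by (auto simp: fun_eq_iff ev_fQ fP_def fA_def fB_def field_simps power3_eq_cube)

lemma gmap_eq:
  "gmap ci v = (\<lambda>i. if i = 0 then v 0 * ((v 1)^2 + 1) else if i = 1 then 2 * v 0 * v 1
     else if i = 2 then of_int ci * v 1 * ((v 0)^2 - 1) else if i = 3 then v 1 * ((v 0)^2 + 1)
     else if i = 4 then v 0 * ((v 1)^2 - 1) else if i = 5 then v 2 else 0)"
  by (auto simp: fun_eq_iff gmap_def gP_def)

lemma iso_part:
  fixes ci :: int
  assumes ii: "(of_int ci :: 'k::field) * of_int ci = -1" and two: "(2::'k) \<noteq> 0"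
  shows "isomorphic_over_Fp (S_minus_D :: (nat \<Rightarrow> 'k) set) X_minus_D1"
proof -
  define \<iota> :: 'k where "\<iota> = of_int ci"
  have ii': "\<iota> * \<iota> = -1" using ii \<iota>_def by simp
  have fm: "fmap ci a = (\<lambda>i. if i = 0 then (a 3 - \<iota> * a 2) / a 1
      else if i = 1 then (a 0 + a 4) / a 1
      else if i = 2 then 2 * a 5 * (a 3 - \<iota> * a 2) * (a 0 + a 4) / (a 1)^3 else 0)"
    if "a 1 \<noteq> 0" for a :: "nat \<Rightarrow> 'k"
    unfolding \<iota>_def by (rule fmap_eq[of a ci, OF that])
  have gm: "gmap ci v = (\<lambda>i. if i = 0 then v 0 * ((v 1)^2 + 1) else if i = 1 then 2 * v 0 * v 1
     else if i = 2 then \<iota> * v 1 * ((v 0)^2 - 1) else if i = 3 then v 1 * ((v 0)^2 + 1)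
     else if i = 4 then v 0 * ((v 1)^2 - 1) else if i = 5 then v 2 else 0)" for v :: "nat \<Rightarrow> 'k"
    unfolding \<iota>_def by (rule gmap_eq)
  have Sd: "a 1 \<noteq> 0" "a 5 \<noteq> 0" "\<forall>i>5. a i = 0"
    "(a 1)^2 - (a 2)^2 = (a 3)^2" "(a 0)^2 - (a 1)^2 = (a 4)^2" "(a 0)^2 - (a 2)^2 = (a 5)^2"
    if "a \<in> S_minus_D" for a :: "nat \<Rightarrow> 'k"
    using that unfolding S_minus_D_def S_cone_def by auto
  have Xd: "v 0 \<noteq> 0" "v 1 \<noteq> 0" "v 2 \<noteq> 0" "\<forall>i>2. v i = 0"
    "(v 2)^2 = ((v 0)^2 * (v 1)^2 + 1) * ((v 0)^2 + (v 1)^2)"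
    if "v \<in> X_minus_D1" for v :: "nat \<Rightarrow> 'k"
    using that unfolding X_minus_D1_def X_pts_def by auto
  have nzA: "a 3 - \<iota> * a 2 \<noteq> 0" and nzB: "a 0 + a 4 \<noteq> 0" if "a \<in> S_minus_D" for a :: "nat \<Rightarrow> 'k"
  proof -
    note h = Sd[OF that]
    show "a 3 - \<iota> * a 2 \<noteq> 0" using algA1[OF ii' h(4)] h(1) by auto
    show "a 0 + a 4 \<noteq> 0" using algA2[OF h(5)] h(1) by auto
  qed
  have fv: "fmap ci a 0 = (a 3 - \<iota>*a 2)/a 1" "fmap ci a 1 = (a 0 + a 4)/a 1"
    "fmap ci a 2 = 2 * a 5 * (a 3 - \<iota> * a 2) * (a 0 + a 4) / (a 1)^3" "\<forall>i>2. fmap ci a i = 0"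
    if "a 1 \<noteq> 0" for a :: "nat \<Rightarrow> 'k"
    using fm[of a, OF that] by simp_all
  have gv: "gmap ci v 0 = v 0 * ((v 1)^2 + 1)" "gmap ci v 1 = 2 * v 0 * v 1"
    "gmap ci v 2 = \<iota> * v 1 * ((v 0)^2 - 1)" "gmap ci v 3 = v 1 * ((v 0)^2 + 1)"
    "gmap ci v 4 = v 0 * ((v 1)^2 - 1)" "gmap ci v 5 = v 2" "\<forall>i>5. gmap ci v i = 0"
    for v :: "nat \<Rightarrow> 'k"
    using gm[of v] by simp_all
  have fX: "fmap ci a \<in> X_minus_D1" if a: "a \<in> S_minus_D" for a :: "nat \<Rightarrow> 'k"
  proof -
    note h = Sd[OF a]
    note v = fv[of a, OF h(1)]
    have "(fmap ci a 2)^2 = ((fmap ci a 0)^2 * (fmap ci a 1)^2 + 1) * ((fmap ci a 0)^2 + (fmap ci a 1)^2)"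
      unfolding v(1-3) by (rule algX[OF ii' h(4) h(5) h(6) h(1)])
    moreover have "fmap ci a 0 * fmap ci a 1 * fmap ci a 2 \<noteq> 0"
      unfolding v(1-3) using h(1,2) nzA[OF a] nzB[OF a] two by simp
    ultimately show ?thesis unfolding X_minus_D1_def X_pts_def using v(4) by auto
  qed
  have gS: "gmap ci v \<in> S_minus_D" if v: "v \<in> X_minus_D1" for v :: "nat \<Rightarrow> 'k"
  proof -
    note h = Xd[OF v]
    have n15: "gmap ci v 1 * gmap ci v 5 \<noteq> 0" unfolding gv using h two by simp
    note G = algG[OF ii' h(5)]
    show ?thesis unfolding S_minus_D_def S_cone_def mem_Collect_eq
    proof (intro conjI)
      show "\<forall>i>5. gmap ci v i = 0" by (rule gv(7))
      show "\<exists>i\<le>5. gmap ci v i \<noteq> 0" using n15 by (intro exI[of _ 1]) simp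
      show "(gmap ci v 1)^2 - (gmap ci v 2)^2 = (gmap ci v 3)^2" unfolding gv by (rule G(1))
      show "(gmap ci v 0)^2 - (gmap ci v 1)^2 = (gmap ci v 4)^2" unfolding gv by (rule G(2))
      show "(gmap ci v 0)^2 - (gmap ci v 2)^2 = (gmap ci v 5)^2" unfolding gv by (rule G(3))
      show "gmap ci v 1 * gmap ci v 5 \<noteq> 0" by (rule n15)
    qed
  qed
  show ?thesis unfolding isomorphic_over_Fp_def
  proof (intro exI conjI)
    show "reg_proj_to_aff S_minus_D (fmap ci :: (nat \<Rightarrow> 'k) \<Rightarrow> _)"
      unfolding reg_proj_to_aff_def
    proof (intro conjI ballI impI)
      fix a b :: "nat \<Rightarrow> 'k" assume a: "a \<in> S_minus_D" and b: "b \<in> S_minus_D" and pe: "proj_eq a b"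
      obtain c where c: "c \<noteq> 0" "a = (\<lambda>i. c * b i)" using pe unfolding proj_eq_def by blast
      have "ev a (fP ci i) = c^3 * ev b (fP ci i)" for i
        using homog_fP[of ci i] c(2) unfolding homog_iff by blast
      moreover have "ev a fQ = c^3 * ev b fQ"
        using homog_fQ c(2) unfolding homog_iff by blast
      ultimately show "fmap ci a = fmap ci b" unfolding fmap_def using c(1) by (simp add: fun_eq_iff)
    next
      fix a :: "nat \<Rightarrow> 'k" assume a: "a \<in> S_minus_D"
      show "\<exists>d Q P. homog d Q TYPE('k) \<and> (\<forall>i<3. homog d (P i) TYPE('k)) \<and> ev a Q \<noteq> 0 \<and>
        (\<forall>b\<in>S_minus_D. ev b Q \<noteq> 0 \<longrightarrow>
            fmap ci b = (\<lambda>i. if i < 3 then ev b (P i) / ev b Q else 0))"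
        using homog_fQ homog_fP Sd(1)[OF a]
        by (intro exI[of _ 3] exI[of _ fQ] exI[of _ "fP ci"]) (auto simp: ev_fQ fmap_def)
    qed
  next
    show "reg_aff_to_proj X_minus_D1 (gmap ci :: (nat \<Rightarrow> 'k) \<Rightarrow> _)"
      unfolding reg_aff_to_proj_def
    proof
      fix a :: "nat \<Rightarrow> 'k" assume "a \<in> X_minus_D1"
      show "\<exists>Q P. ev a Q \<noteq> 0 \<and>
        (\<forall>b\<in>(X_minus_D1 :: (nat \<Rightarrow> 'k) set). ev b Q \<noteq> 0 \<longrightarrow> (\<exists>i\<le>5. ev b (P i) \<noteq> 0) \<and>
            proj_eq (gmap ci b) (\<lambda>i. if i \<le> 5 then ev b (P i) else 0))"
      proof (intro exI[of _ "Const 1"] exI[of _ "gP ci"] conjI)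
        show "ev a (Const 1) \<noteq> 0" by simp
        show "\<forall>b\<in>(X_minus_D1 :: (nat \<Rightarrow> 'k) set). ev b (Const 1) \<noteq> 0 \<longrightarrow> (\<exists>i\<le>5. ev b (gP ci i) \<noteq> 0) \<and>
            proj_eq (gmap ci b) (\<lambda>i. if i \<le> 5 then ev b (gP ci i) else 0)"
        proof (intro ballI impI conjI)
          fix b :: "nat \<Rightarrow> 'k" assume b: "b \<in> X_minus_D1"
          have "ev b (gP ci 1) \<noteq> 0" using Xd[OF b] two by (simp add: gP_def)
          then show "\<exists>i\<le>5. ev b (gP ci i) \<noteq> 0" by (intro exI[of _ 1]) simp
          show "proj_eq (gmap ci b) (\<lambda>i. if i \<le> 5 then ev b (gP ci i) else 0)"
            unfolding proj_eq_def gmap_def by (intro exI[of _ 1]) simp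
        qed
      qed
    qed
  next
    show "fmap ci ` S_minus_D \<subseteq> (X_minus_D1 :: (nat \<Rightarrow> 'k) set)" using fX by blast
  next
    show "gmap ci ` X_minus_D1 \<subseteq> (S_minus_D :: (nat \<Rightarrow> 'k) set)" using gS by blast
  next
    show "\<forall>b\<in>X_minus_D1. fmap ci (gmap ci b) = (b :: nat \<Rightarrow> 'k)"
    proof
      fix v :: "nat \<Rightarrow> 'k" assume v: "v \<in> X_minus_D1"
      note h = Xd[OF v]
      have d: "2 * v 0 * v 1 \<noteq> 0" using h two by simp
      have g1: "gmap ci v 1 \<noteq> 0" unfolding gv using d .
      note e = algH(1,2)[OF ii' d] algH(3)[OF ii' d, of "v 2"]
      show "fmap ci (gmap ci v) = v"
      proof
 fix i :: nat
        consider "i = 0" | "i = 1" | "i = 2" | "i > 2" by linarith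
        then show "fmap ci (gmap ci v) i = v i"
        proof cases
          case 1 show ?thesis unfolding 1 fv(1)[of "gmap ci v", OF g1] gv(1-6) by (rule e(1))
        next
          case 2 show ?thesis unfolding 2 fv(2)[of "gmap ci v", OF g1] gv(1-6) by (rule e(2))
        next
          case 3 show ?thesis unfolding 3 fv(3)[of "gmap ci v", OF g1] gv(1-6) by (rule e(3))
        next
          case 4 then show ?thesis using fv(4)[of "gmap ci v", OF g1] h(4) by simp
        qed
      qed
    qed
  next
    show "\<forall>a\<in>S_minus_D. proj_eq (gmap ci (fmap ci a)) (a :: nat \<Rightarrow> 'k)"
    proof
      fix a :: "nat \<Rightarrow> 'k" assume a: "a \<in> S_minus_D"
      note h = Sd[OF a]
      note v = fv[of a, OF h(1)]
      note K = algK[OF ii' h(4) h(5) h(6) h(1)]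
      define c where "c = 2 * ((a 3 - \<iota>*a 2)/a 1) * ((a 0 + a 4)/a 1) / a 1"
      have c0: "c \<noteq> 0" unfolding c_def using h(1) nzA[OF a] nzB[OF a] two by simp
      have "gmap ci (fmap ci a) i = c * a i" for i
      proof -
        consider "i = 0" | "i = 1" | "i = 2" | "i = 3" | "i = 4" | "i = 5" | "i > 5" by linarith
        then show ?thesis
        proof cases
          case 1 show ?thesis unfolding 1 gv(1-6) v(1-3) c_def by (rule K(1))
        next
          case 2 show ?thesis unfolding 2 gv(1-6) v(1-3) c_def by (rule K(2))
        next
          case 3 show ?thesis unfolding 3 gv(1-6) v(1-3) c_def by (rule K(3))
        next
          case 4 show ?thesis unfolding 4 gv(1-6) v(1-3) c_def by (rule K(4))
        next
          case 5 show ?thesis unfolding 5 gv(1-6) v(1-3) c_def by (rule K(5))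
        next
          case 6 show ?thesis unfolding 6 gv(1-6) v(1-3) c_def by (rule K(6))
        next
          case 7 then show ?thesis using gv(7) h(3) by simp
        qed
      qed
      then show "proj_eq (gmap ci (fmap ci a)) a" unfolding proj_eq_def using c0 by blast
    qed
  qed
qed


lemma ev_FS: "ev x F3 = (x 1)^2 - (x 2)^2" "ev x F4 = (x 0)^2 - (x 1)^2" "ev x F5 = (x 0)^2 - (x 2)^2"
  "ev x GS = x 1 * (((x 1)^2 - (x 2)^2) * (((x 0)^2 - (x 1)^2) * ((x 0)^2 - (x 2)^2)))"
  "ev x FX = ((x 0)^2 * (x 1)^2 + 1) * ((x 0)^2 + (x 1)^2)"
  "ev x GX = x 0 * (x 1 * (((x 0)^2 * (x 1)^2 + 1) * ((x 0)^2 + (x 1)^2)))"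
  by (simp_all add: F3_def F4_def F5_def GS_def FX_def GX_def)

lemma S_dense:
  fixes \<iota> :: "'k::field"
  assumes ii: "\<iota> * \<iota> = -1" and two: "(2::'k) \<noteq> 0" and inf: "infinite (UNIV::'k set)"
    and sq: "\<And>a::'k. \<exists>r. r * r = a"
  shows "proj_dense (S_cone :: (nat \<Rightarrow> 'k) set) S_minus_D"
  unfolding proj_dense_def
proof (intro allI impI)
  fix d Q assume ex: "\<exists>b\<in>(S_cone :: (nat \<Rightarrow> 'k) set). ev b Q \<noteq> 0"
  show "\<exists>b\<in>(S_minus_D :: (nat \<Rightarrow> 'k) set). ev b Q \<noteq> 0"
  proof (rule ccontr)
    assume "\<not> ?thesis"
    then have Z: "\<forall>b\<in>(S_minus_D :: (nat \<Rightarrow> 'k) set). ev b Q = 0" by blast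
    define W0 :: "(nat \<Rightarrow> 'k) set" where "W0 = {x. \<forall>i>5. x i = 0}"
    define W1 where "W1 = {x\<in>W0. (x 3)^2 = ev x F3}"
    define W2 where "W2 = {x\<in>W1. (x 4)^2 = ev x F4}"
    define W3 where "W3 = {x\<in>W2. (x 5)^2 = ev x F5}"
    have ok0: "ext_ok W0 GS"
    proof (rule ext_ok_base[OF inf, of W0 "\<lambda>i. if i = 1 then 1 else if i = 2 then \<iota> else 0"])
      show "(\<lambda>i. c i + t * (a i - c i)) \<in> W0" if "c \<in> W0" "a \<in> W0" for c a t
        using that by (simp add: W0_def)
      show "(\<lambda>i. if i = 1 then 1 else if i = 2 then \<iota> else 0) \<in> W0" by (simp add: W0_def)
      have "1 - \<iota> * \<iota> = (2::'k)" using ii by simp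
      then show "ev (\<lambda>i. if i = 1 then 1 else if i = 2 then \<iota> else 0) GS \<noteq> 0"
        using ii two by (simp add: ev_FS power2_eq_square)
    qed
    have ok1: "ext_ok W1 GS" unfolding W1_def
      by (rule ext_ok_step[OF ok0 _ _ _ _ two sq])
        (auto simp: W0_def indep_def ev_FS)
    have ok2: "ext_ok W2 GS" unfolding W2_def
      by (rule ext_ok_step[OF ok1 _ _ _ _ two sq])
        (auto simp: W1_def W0_def indep_def ev_FS)
    have ok3: "ext_ok W3 GS" unfolding W3_def
      by (rule ext_ok_step[OF ok2 _ _ _ _ two sq])
        (auto simp: W2_def W1_def W0_def indep_def ev_FS)
    have "\<forall>x\<in>W3. ev x GS \<noteq> 0 \<longrightarrow> ev x Q = 0"
    proof (intro ballI impI)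
      fix x assume x: "x \<in> W3" and g: "ev x GS \<noteq> 0"
      have x1: "x 1 \<noteq> 0" and f5: "(x 0)^2 - (x 2)^2 \<noteq> 0" using g by (auto simp: ev_FS)
      have w: "\<forall>i>5. x i = 0" "(x 3)^2 = (x 1)^2 - (x 2)^2" "(x 4)^2 = (x 0)^2 - (x 1)^2"
        "(x 5)^2 = (x 0)^2 - (x 2)^2"
        using x by (auto simp: W3_def W2_def W1_def W0_def ev_FS)
      have x5: "x 5 \<noteq> 0" using w(4) f5 by auto
      have "x \<in> S_minus_D" unfolding S_minus_D_def S_cone_def mem_Collect_eq
      proof (intro conjI)
        show "\<forall>i>5. x i = 0" by (rule w(1))
        show "\<exists>i\<le>5. x i \<noteq> 0" using x1 by (intro exI[of _ 1]) simp
        show "(x 1)^2 - (x 2)^2 = (x 3)^2" using w(2) by simp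
        show "(x 0)^2 - (x 1)^2 = (x 4)^2" using w(3) by simp
        show "(x 0)^2 - (x 2)^2 = (x 5)^2" using w(4) by simp
        show "x 1 * x 5 \<noteq> 0" using x1 x5 by simp
      qed
      then show "ev x Q = 0" using Z by blast
    qed
    then have all: "\<forall>x\<in>W3. ev x Q = 0" using ok3 unfolding ext_ok_def by blast
    obtain b :: "nat \<Rightarrow> 'k" where b: "b \<in> S_cone" "ev b Q \<noteq> 0" using ex by blast
    have "b \<in> W3" using b(1) unfolding S_cone_def W3_def W2_def W1_def W0_def
      by (auto simp: ev_FS)
    then show False using all b(2) by blast
  qed
qed

lemma X_dense:
  fixes \<iota> :: "'k::field"
  assumes two: "(2::'k) \<noteq> 0" and inf: "infinite (UNIV::'k set)"
    and sq: "\<And>a::'k. \<exists>r. r * r = a"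
  shows "aff_dense (X_pts :: (nat \<Rightarrow> 'k) set) X_minus_D1"
  unfolding aff_dense_def
proof (intro allI impI)
  fix Q assume ex: "\<exists>b\<in>(X_pts :: (nat \<Rightarrow> 'k) set). ev b Q \<noteq> 0"
  show "\<exists>b\<in>(X_minus_D1 :: (nat \<Rightarrow> 'k) set). ev b Q \<noteq> 0"
  proof (rule ccontr)
    assume "\<not> ?thesis"
    then have Z: "\<forall>b\<in>(X_minus_D1 :: (nat \<Rightarrow> 'k) set). ev b Q = 0" by blast
    define W0 :: "(nat \<Rightarrow> 'k) set" where "W0 = {x. \<forall>i>2. x i = 0}"
    define W1 where "W1 = {x\<in>W0. (x 2)^2 = ev x FX}"
    have ok0: "ext_ok W0 GX"
    proof (rule ext_ok_base[OF inf, of W0 "\<lambda>i. if i < 2 then 1 else 0"])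
      show "(\<lambda>i. c i + t * (a i - c i)) \<in> W0" if "c \<in> W0" "a \<in> W0" for c a t
        using that by (simp add: W0_def)
      show "(\<lambda>i. if i < 2 then 1 else 0) \<in> W0" by (simp add: W0_def)
      have "(2::'k) * 2 \<noteq> 0" using two mult_eq_0_iff[of "2::'k" 2] by blast
      then have "(4::'k) \<noteq> 0" by simp
      then show "ev (\<lambda>i. if i < 2 then 1 else 0) GX \<noteq> (0::'k)"
        using two by (simp add: ev_FS)
    qed
    have ok1: "ext_ok W1 GX" unfolding W1_def
      by (rule ext_ok_step[OF ok0 _ _ _ _ two sq])
        (auto simp: W0_def indep_def ev_FS)
    have "\<forall>x\<in>W1. ev x GX \<noteq> 0 \<longrightarrow> ev x Q = 0"
    proof (intro ballI impI)
      fix x assume x: "x \<in> W1" and g: "ev x GX \<noteq> 0"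
      have w: "\<forall>i>2. x i = 0" "(x 2)^2 = ((x 0)^2 * (x 1)^2 + 1) * ((x 0)^2 + (x 1)^2)"
        using x by (auto simp: W1_def W0_def ev_FS)
      have "x 0 * x 1 * x 2 \<noteq> 0" using g w(2) by (auto simp: ev_FS)
      then have "x \<in> X_minus_D1" unfolding X_minus_D1_def X_pts_def using w by auto
      then show "ev x Q = 0" using Z by blast
    qed
    then have all: "\<forall>x\<in>W1. ev x Q = 0" using ok1 unfolding ext_ok_def by blast
    obtain b :: "nat \<Rightarrow> 'k" where b: "b \<in> X_pts" "ev b Q \<noteq> 0" using ex by blast
    have "b \<in> W1" using b(1) unfolding X_pts_def W1_def W0_def by (auto simp: ev_FS)
    then show False using all b(2) by blast
  qed
qed

theorem lemma4p3:
  fixes p :: nat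
  assumes "prime p" and "p mod 4 = 1"
    and "CHAR('k::field) = p" and "alg_closed TYPE('k)"
  shows "birational_over_Fp (S_cone :: (nat \<Rightarrow> 'k) set) X_pts
       \<and> isomorphic_over_Fp (S_minus_D :: (nat \<Rightarrow> 'k) set) X_minus_D1"
proof -
  obtain ci :: int where ci: "int p dvd ci^2 + 1" using sqrt_m1_int[OF assms(1,2)] by blast
  have "(of_int (ci^2 + 1) :: 'k) = 0"
    by (subst of_int_eq_0_iff_char_dvd) (use ci assms(3) in simp)
  then have "(of_int ci :: 'k)^2 + 1 = 0" by simp
  then have ii: "(of_int ci :: 'k) * of_int ci = -1"
    by (simp add: power2_eq_square eq_neg_iff_add_eq_0)
  have "\<not> p dvd 2"
  proof
    assume "p dvd 2"
    then have "p \<le> 2" by (simp add: dvd_imp_le)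
    moreover have "p \<ge> 2" using prime_ge_2_nat[OF assms(1)] .
    ultimately have "p = 2" by simp
    then show False using assms(2) by simp
  qed
  then have two: "(2::'k) \<noteq> 0" using of_nat_eq_0_iff_char_dvd[of 2, where 'a='k] assms(3) by simp
  have inf: "infinite (UNIV :: 'k set)" by (rule alg_closed_infinite[OF assms(4)])
  have sq: "\<And>a::'k. \<exists>r. r * r = a" using alg_closed_sqrt[OF assms(4)] by blast
  have iso: "isomorphic_over_Fp (S_minus_D :: (nat \<Rightarrow> 'k) set) X_minus_D1"
    by (rule iso_part[OF ii two])
  have po: "proj_open (S_cone :: (nat \<Rightarrow> 'k) set) S_minus_D"
    unfolding proj_open_def
  proof (intro conjI ballI)
    show "(S_minus_D :: (nat \<Rightarrow> 'k) set) \<subseteq> S_cone" unfolding S_minus_D_def by auto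
    fix a :: "nat \<Rightarrow> 'k" assume a: "a \<in> S_minus_D"
    have h: "homog 2 (Mul (Var 1) (Var 5)) TYPE('k)"
      unfolding homog_iff by (simp add: power2_eq_square algebra_simps)
    show "\<exists>d Q. homog d Q TYPE('k) \<and> ev a Q \<noteq> 0 \<and> {b \<in> S_cone. ev b Q \<noteq> 0} \<subseteq> S_minus_D"
      using h a unfolding S_minus_D_def
      by (intro exI[of _ 2] exI[of _ "Mul (Var 1) (Var 5)"]) auto
  qed
  have ao: "aff_open (X_pts :: (nat \<Rightarrow> 'k) set) X_minus_D1"
    unfolding aff_open_def
  proof (intro conjI ballI)
    show "(X_minus_D1 :: (nat \<Rightarrow> 'k) set) \<subseteq> X_pts" unfolding X_minus_D1_def by auto
    fix a :: "nat \<Rightarrow> 'k" assume a: "a \<in> X_minus_D1"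
    show "\<exists>Q. ev a Q \<noteq> 0 \<and> {b \<in> X_pts. ev b Q \<noteq> 0} \<subseteq> X_minus_D1"
      using a unfolding X_minus_D1_def
      by (intro exI[of _ "Mul (Mul (Var 0) (Var 1)) (Var 2)"]) auto
  qed
  have "birational_over_Fp (S_cone :: (nat \<Rightarrow> 'k) set) X_pts"
    unfolding birational_over_Fp_def
    using po S_dense[OF ii two inf sq] ao X_dense[OF two inf sq] iso by blast
  with iso show ?thesis by blast
qed

end
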